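(* Let $A = A_s + A_i\epsilon\in\mathbb{DR}^{m\times n}$ with $m\ge n$, let $k\le\min(m,n)$, and suppose $A_sP_s = Q_sR_s$, where $P_s\in\mathbb{R}^{n\times n}$ is a permutation matrix, $Q_s\in\mathbb{R}^{m\times k}$ has orthonormal columns, and $R_s = (r_{s_{ij}})\in\mathbb{R}^{k\times n}$ is upper trapezoidal (i.e. $r_{s_{ij}}=0$ for $i>j$) with $r_{s_{jj}}\neq 0$ for $j=1,\dots,k$. Then there exist $Q_i\in\mathbb{R}^{m\times k}$ and $R_i\in\mathbb{R}^{k\times n}$ such that $Q = Q_s + Q_i\epsilon$ satisfies $Q^{\top}Q = I_k$, $R = R_s + R_i\epsilon$ is upper trapezoidal, and $AP_s = QR$, if and only if $$(I_m - Q_sQ_s^{\top})A_iP_s(I_n - R_s^{\dagger}R_s) = O_{m\times n}.$$ In that case one such decomposition is obtained as follows: put $B = Q_s^{\top}A_iP_s = [b_1,\dots,b_n]$, define $P\in\mathbb{R}^{k\times k}$ with zero diagonal, strictly lower triangular part $$p_1(2{:}k) = b_1(2{:}k)/r_{s_{11}},\qquad p_j(j{+}1{:}k) = \Big(b_j(j{+}1{:}k) - \sum_{t=1}^{j-1} r_{s_{tj}}\,p_t(j{+}1{:}k)\Big)\Big/r_{s_{jj}},\quad j=2,\dots,k-1,$$ and $P^{\top}=-P$, and set $$Q_i = (I_m - Q_sQ_s^{\top})A_iP_sR_s^{\dagger} + Q_sP,\qquad R_i = Q_s^{\top}A_iP_s - PR_s.$$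
   Context: A dual number is $a = a_s + a_i\epsilon$ with $a_s,a_i\in\mathbb{R}$, where $\epsilon^2=0$, $\epsilon\neq 0$; $\mathbb{DR}^{m\times n}$ denotes the set of dual matrices $A = A_s + A_i\epsilon$ with $A_s, A_i\in\mathbb{R}^{m\times n}$. Products use $\epsilon^2=0$: $(A_s+A_i\epsilon)(B_s+B_i\epsilon) = A_sB_s + (A_sB_i + A_iB_s)\epsilon$. The transpose is $A^{\top}=A_s^{\top}+A_i^{\top}\epsilon$. A dual matrix is upper trapezoidal if both its standard and infinitesimal parts are upper trapezoidal (zero below the main diagonal). $M^{\dagger}$ denotes the Moore–Penrose pseudoinverse of a real matrix $M$. For a vector $v$, $v(a{:}b)$ is the subvector of entries $a$ through $b$. (In the paper, $A_sP_s=Q_sR_s$ arises from a randomized QR decomposition with column pivoting, but only the stated factorization properties are used.) *)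

theory Defs
  imports "Jordan_Normal_Form.Matrix" "HOL-Combinatorics.Permutations"
begin

text \<open>Dual matrices A = A_s + A_i eps are represented as pairs (A_s, A_i) of real matrices.\<close>
type_synonym dmat = "real mat \<times> real mat"

definition dual_mult :: "dmat \<Rightarrow> dmat \<Rightarrow> dmat" where
  "dual_mult A B = (fst A * fst B, fst A * snd B + snd A * fst B)"

definition dual_transpose :: "dmat \<Rightarrow> dmat" where
  "dual_transpose A = (transpose_mat (fst A), transpose_mat (snd A))"

definition upper_trapezoidal :: "real mat \<Rightarrow> bool" where
  "upper_trapezoidal M \<longleftrightarrow> (\<forall>i<dim_row M. \<forall>j<dim_col M. j < i \<longrightarrow> M $$ (i, j) = 0)"

definition dual_upper_trapezoidal :: "dmat \<Rightarrow> bool" where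
  "dual_upper_trapezoidal A \<longleftrightarrow> upper_trapezoidal (fst A) \<and> upper_trapezoidal (snd A)"

definition permutation_mat :: "nat \<Rightarrow> real mat \<Rightarrow> bool" where
  "permutation_mat n P \<longleftrightarrow> (\<exists>p. p permutes {0..<n} \<and>
      P = mat n n (\<lambda>(i, j). if i = p j then 1 else 0))"

definition pinv :: "real mat \<Rightarrow> real mat" where
  "pinv M = (THE X. X \<in> carrier_mat (dim_col M) (dim_row M) \<and>
      M * X * M = M \<and> X * M * X = X \<and>
      transpose_mat (M * X) = M * X \<and> transpose_mat (X * M) = X * M)"

text \<open>Strictly lower triangular entries of the matrix P of the theorem (0-based indices):
  for i > j,  P(i,j) = (B(i,j) - sum_{t<j} R(t,j) P(i,t)) / R(j,j).\<close>
fun lowP :: "real mat \<Rightarrow> real mat \<Rightarrow> nat \<Rightarrow> nat \<Rightarrow> real" where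
  "lowP B R i j = (B $$ (i, j) - (\<Sum>t<j. R $$ (t, j) * lowP B R i t)) / R $$ (j, j)"

definition Pmat :: "nat \<Rightarrow> real mat \<Rightarrow> real mat \<Rightarrow> real mat" where
  "Pmat k B R = mat k k (\<lambda>(i, j). if j < i then lowP B R i j
                                   else if i < j then - lowP B R j i else 0)"

end

theory Submission
  imports Defs "Jordan_Normal_Form.Determinant"
begin

declare lowP.simps[simp del]

lemma trap_transpose_inj:
  fixes R :: "real mat"
  assumes R: "R \<in> carrier_mat k n" and kn: "k \<le> n" and ut: "upper_trapezoidal R"
    and d: "\<forall>j<k. R $$ (j, j) \<noteq> 0"
    and x: "x \<in> carrier_vec k" and z: "transpose_mat R *\<^sub>v x = 0\<^sub>v n"
  shows "x = 0\<^sub>v k"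
proof -
  have "\<forall>j. j < k \<longrightarrow> x $ j = 0"
  proof
    fix j
    show "j < k \<longrightarrow> x $ j = 0"
    proof (induction j rule: less_induct)
      case (less j)
      show ?case
      proof
        assume jk: "j < k"
        have "(transpose_mat R *\<^sub>v x) $ j = 0" using z jk kn by simp
        moreover have "(transpose_mat R *\<^sub>v x) $ j = (\<Sum>i\<in>{0..<k}. R $$ (i, j) * x $ i)"
          using R x jk kn by (simp add: scalar_prod_def)
        moreover have "(\<Sum>i\<in>{0..<k}. R $$ (i, j) * x $ i) = R $$ (j, j) * x $ j"
        proof (rule sum.remove[THEN trans])
          show "finite {0..<k}" by simp
          show "j \<in> {0..<k}" using jk by simp
          have "(\<Sum>i\<in>{0..<k} - {j}. R $$ (i, j) * x $ i) = 0"
          proof (rule sum.neutral, intro ballI)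
            fix i assume i: "i \<in> {0..<k} - {j}"
            show "R $$ (i, j) * x $ i = 0"
            proof (cases "i < j")
              case True thus ?thesis using less.IH[of i] i by auto
            next
              case False
              hence "j < i" using i by auto
              thus ?thesis using ut R i jk kn unfolding upper_trapezoidal_def by auto
            qed
          qed
          thus "R $$ (j, j) * x $ j + (\<Sum>i\<in>{0..<k} - {j}. R $$ (i, j) * x $ i) = R $$ (j, j) * x $ j" by simp
        qed
        ultimately show "x $ j = 0" using d jk by auto
      qed
    qed
  qed
  thus ?thesis using x by (intro eq_vecI) auto
qed

lemma self_scalar_zero:
  fixes w :: "real vec"
  assumes "w \<bullet> w = 0" and "w \<in> carrier_vec n"
  shows "w = 0\<^sub>v n"
proof -
  have "(\<Sum>i\<in>{0..<dim_vec w}. w $ i * w $ i) = 0" using assms(1) by (simp add: scalar_prod_def)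
  hence "\<forall>i\<in>{0..<dim_vec w}. w $ i * w $ i = 0"
    by (subst (asm) sum_nonneg_eq_0_iff) auto
  thus ?thesis using assms(2) by (intro eq_vecI) auto
qed

lemma gram_det:
  fixes R :: "real mat"
  assumes R: "R \<in> carrier_mat k n" and kn: "k \<le> n" and ut: "upper_trapezoidal R"
    and d: "\<forall>j<k. R $$ (j, j) \<noteq> 0"
  shows "det (R * transpose_mat R) \<noteq> 0"
proof
  assume "det (R * transpose_mat R) = 0"
  then obtain v where v: "v \<in> carrier_vec k" "v \<noteq> 0\<^sub>v k" "(R * transpose_mat R) *\<^sub>v v = 0\<^sub>v k"
    using det_0_iff_vec_prod_zero[of "R * transpose_mat R" k] R by auto
  let ?w = "transpose_mat R *\<^sub>v v"
  have w: "?w \<in> carrier_vec n" using R v(1) by (intro mult_mat_vec_carrier) auto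
  have "?w \<bullet> ?w = v \<bullet> (R *\<^sub>v ?w)"
    by (rule transpose_vec_mult_scalar[OF R w v(1)])
  also have "R *\<^sub>v ?w = 0\<^sub>v k" using v(3) R v(1) by (subst assoc_mult_mat_vec[symmetric]) auto
  also have "v \<bullet> 0\<^sub>v k = 0" using v(1) by simp
  finally have "?w = 0\<^sub>v n" using self_scalar_zero w by blast
  hence "v = 0\<^sub>v k" using trap_transpose_inj[OF R kn ut d v(1)] by simp
  thus False using v(2) by simp
qed

lemma pinv_props:
  fixes R :: "real mat"
  assumes R: "R \<in> carrier_mat k n" and kn: "k \<le> n" and ut: "upper_trapezoidal R"
    and d: "\<forall>j<k. R $$ (j, j) \<noteq> 0"
  shows "pinv R \<in> carrier_mat n k \<and> R * pinv R = 1\<^sub>m k"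
proof -
  define G where "G = R * transpose_mat R"
  have G: "G \<in> carrier_mat k k" using R unfolding G_def by auto
  have "G \<in> Units (ring_mat TYPE(real) k ())"
    by (rule det_non_zero_imp_unit[OF G]) (use gram_det[OF R kn ut d] in \<open>simp add: G_def\<close>)
  then obtain Gi where Gi: "Gi \<in> carrier_mat k k" and GiG: "Gi * G = 1\<^sub>m k" and GGi: "G * Gi = 1\<^sub>m k"
    unfolding Units_def ring_mat_def by auto
  have GT: "transpose_mat G = G" unfolding G_def using R by (simp add: transpose_mult[of R k n])
  have "transpose_mat Gi * G = 1\<^sub>m k"
    using transpose_mult[OF G Gi] GGi GT by simp
  hence GiT: "transpose_mat Gi = Gi"
  proof -
    assume h: "transpose_mat Gi * G = 1\<^sub>m k"
    have "transpose_mat Gi = transpose_mat Gi * (G * Gi)" using GGi Gi by simp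
    also have "\<dots> = (transpose_mat Gi * G) * Gi" using Gi G by simp
    also have "\<dots> = Gi" using h Gi by simp
    finally show ?thesis .
  qed
  define X0 where "X0 = transpose_mat R * Gi"
  have X0: "X0 \<in> carrier_mat n k" using R Gi unfolding X0_def by auto
  have RX0: "R * X0 = 1\<^sub>m k"
  proof -
    have "R * X0 = (R * transpose_mat R) * Gi" unfolding X0_def using R Gi by simp
    thus ?thesis using GGi unfolding G_def by simp
  qed
  let ?P = "\<lambda>X. X \<in> carrier_mat (dim_col R) (dim_row R) \<and>
      R * X * R = R \<and> X * R * X = X \<and>
      transpose_mat (R * X) = R * X \<and> transpose_mat (X * R) = X * R"
  have PX0: "?P X0"
  proof (intro conjI)
    show "X0 \<in> carrier_mat (dim_col R) (dim_row R)" using X0 R by simp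
    show "R * X0 * R = R" using RX0 R by simp
    show "X0 * R * X0 = X0" using RX0 R X0 by simp
    show "transpose_mat (R * X0) = R * X0" using RX0 by simp
    have "transpose_mat (X0 * R) = transpose_mat R * transpose_mat X0"
      using transpose_mult[OF X0 R] .
    also have "transpose_mat X0 = Gi * R"
      unfolding X0_def using transpose_mult[of "transpose_mat R" n k Gi k] R Gi GiT by simp
    also have "transpose_mat R * (Gi * R) = X0 * R" unfolding X0_def using R Gi by simp
    finally show "transpose_mat (X0 * R) = X0 * R" .
  qed
  have uniq: "X = X0" if PX: "?P X" for X
  proof -
    have X: "X \<in> carrier_mat n k" using PX R by simp
    have RX: "R * X = 1\<^sub>m k"
    proof -
      have "R * X = R * X * (R * X0)" using RX0 R X by simp
      also have "\<dots> = (R * X * R) * X0" by (rule assoc_mult_mat[symmetric]) (use R X X0 in auto)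
      also have "\<dots> = 1\<^sub>m k" using PX RX0 by simp
      finally show ?thesis .
    qed
    have "X = X * (R * X0)" using RX0 X by simp
    also have "\<dots> = (X * R) * X0" using R X X0 by simp
    also have "\<dots> = transpose_mat (X * R) * X0" using PX by simp
    also have "\<dots> = (transpose_mat R * transpose_mat X) * X0" using transpose_mult[OF X R] by simp
    also have "\<dots> = transpose_mat R * (transpose_mat X * (transpose_mat R * Gi))"
      unfolding X0_def by (rule assoc_mult_mat[of _ n k _ n _ k]) (use R X Gi in auto)
    also have "transpose_mat X * (transpose_mat R * Gi) = (transpose_mat X * transpose_mat R) * Gi"
      by (rule assoc_mult_mat[symmetric, of _ k n _ k _ k]) (use R X Gi in auto)
    also have "transpose_mat X * transpose_mat R = 1\<^sub>m k"
      using transpose_mult[OF R X] RX by simp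
    also have "transpose_mat R * (1\<^sub>m k * Gi) = X0" unfolding X0_def using Gi by simp
    finally show ?thesis .
  qed
  have "pinv R = X0" unfolding pinv_def
    by (rule the_equality, rule PX0, rule uniq)
  thus ?thesis using X0 RX0 by simp
qed

lemma trap_sum:
  fixes R B :: "real mat"
  assumes R: "R \<in> carrier_mat k n" and ut: "upper_trapezoidal R"
    and d: "\<forall>j<k. R $$ (j, j) \<noteq> 0" and ji: "j < i" and ik: "i < k" and jn: "j < n"
  shows "(\<Sum>t\<in>{0..<k}. Pmat k B R $$ (i, t) * R $$ (t, j)) = B $$ (i, j)"
proof -
  have jk: "j < k" using ji ik by simp
  have split: "{0..<k} = {0..<j} \<union> ({j} \<union> {Suc j..<k})" using jk by auto
  have s1: "(\<Sum>t\<in>{Suc j..<k}. Pmat k B R $$ (i, t) * R $$ (t, j)) = 0"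
    by (rule sum.neutral) (use ut R jn in \<open>auto simp: upper_trapezoidal_def\<close>)
  have s0: "(\<Sum>t\<in>{0..<j}. Pmat k B R $$ (i, t) * R $$ (t, j)) = (\<Sum>t<j. R $$ (t, j) * lowP B R i t)"
    by (rule sum.cong) (use ji ik in \<open>auto simp: Pmat_def lessThan_atLeast0\<close>)
  have pj: "Pmat k B R $$ (i, j) = lowP B R i j" using ji ik by (simp add: Pmat_def)
  have lj: "lowP B R i j * R $$ (j, j) = B $$ (i, j) - (\<Sum>t<j. R $$ (t, j) * lowP B R i t)"
    using d jk by (subst lowP.simps) simp
  have "(\<Sum>t\<in>{0..<k}. Pmat k B R $$ (i, t) * R $$ (t, j)) =
        (\<Sum>t\<in>{0..<j}. Pmat k B R $$ (i, t) * R $$ (t, j)) + (Pmat k B R $$ (i, j) * R $$ (j, j)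
        + (\<Sum>t\<in>{Suc j..<k}. Pmat k B R $$ (i, t) * R $$ (t, j)))"
    unfolding split by (subst sum.union_disjoint) auto
  also have "\<dots> = B $$ (i, j)" unfolding s0 s1 pj lj by simp
  finally show ?thesis .
qed

lemma Pmat_skew: "Pmat k B R + transpose_mat (Pmat k B R) = 0\<^sub>m k k"
  by (rule eq_matI) (auto simp: Pmat_def)

lemma Pmat_carrier: "Pmat k B R \<in> carrier_mat k k"
  by (simp add: Pmat_def)

lemma minus_zero_eq:
  fixes a b :: "real mat"
  assumes "a \<in> carrier_mat r c" "b \<in> carrier_mat r c" "a - b = 0\<^sub>m r c"
  shows "a = b"
proof (rule eq_matI)
  fix i j assume "i < dim_row b" "j < dim_col b"
  thus "a $$ (i, j) = b $$ (i, j)" using assms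
    by (metis (no_types, lifting) carrier_matD(1,2) eq_iff_diff_eq_0 index_minus_mat(1) index_zero_mat(1))
qed (use assms in auto)

lemma sum_cancel_aux:
  fixes a b c :: "real mat"
  assumes "a \<in> carrier_mat r s" "b \<in> carrier_mat r s" "c \<in> carrier_mat r s"
  shows "(a - b) + (c + b) = a + c"
  by (rule eq_matI) (use assms in auto)

lemma proj_sum:
  fixes M :: "real mat"
  assumes "M \<in> carrier_mat m m" "C \<in> carrier_mat m n"
  shows "M * C + (1\<^sub>m m - M) * C = C"
proof -
  have "M * C + (1\<^sub>m m - M) * C = (M + (1\<^sub>m m - M)) * C"
    by (rule add_mult_distrib_mat[symmetric]) (use assms in auto)
  also have "M + (1\<^sub>m m - M) = 1\<^sub>m m" by (rule eq_matI) (use assms in auto)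
  finally show ?thesis using assms by simp
qed

theorem theorem3p3:
  fixes m n k :: nat and As Ai Ps Qs Rs :: "real mat"
  assumes "n \<le> m" and "k \<le> min m n"
    and "As \<in> carrier_mat m n" and "Ai \<in> carrier_mat m n"
    and "Ps \<in> carrier_mat n n" and "permutation_mat n Ps"
    and "Qs \<in> carrier_mat m k" and "transpose_mat Qs * Qs = 1\<^sub>m k"
    and "Rs \<in> carrier_mat k n" and "upper_trapezoidal Rs"
    and "\<forall>j<k. Rs $$ (j, j) \<noteq> 0"
    and "As * Ps = Qs * Rs"
  shows "((\<exists>Qi Ri. Qi \<in> carrier_mat m k \<and> Ri \<in> carrier_mat k n \<and>
            dual_mult (dual_transpose (Qs, Qi)) (Qs, Qi) = (1\<^sub>m k, 0\<^sub>m k k) \<and>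
            dual_upper_trapezoidal (Rs, Ri) \<and>
            dual_mult (As, Ai) (Ps, 0\<^sub>m n n) = dual_mult (Qs, Qi) (Rs, Ri))
          \<longleftrightarrow> (1\<^sub>m m - Qs * transpose_mat Qs) * Ai * Ps * (1\<^sub>m n - pinv Rs * Rs) = 0\<^sub>m m n)
       \<and> ((1\<^sub>m m - Qs * transpose_mat Qs) * Ai * Ps * (1\<^sub>m n - pinv Rs * Rs) = 0\<^sub>m m n \<longrightarrow>
          (let B = transpose_mat Qs * Ai * Ps;
               P = Pmat k B Rs;
               Qi = (1\<^sub>m m - Qs * transpose_mat Qs) * Ai * Ps * pinv Rs + Qs * P;
               Ri = transpose_mat Qs * Ai * Ps - P * Rs
           in dual_mult (dual_transpose (Qs, Qi)) (Qs, Qi) = (1\<^sub>m k, 0\<^sub>m k k) \<and>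
              dual_upper_trapezoidal (Rs, Ri) \<and>
              dual_mult (As, Ai) (Ps, 0\<^sub>m n n) = dual_mult (Qs, Qi) (Rs, Ri)))"
proof -
  have kn: "k \<le> n" using assms(2) by simp
  define X where "X = pinv Rs"
  have X: "X \<in> carrier_mat n k" and RX: "Rs * X = 1\<^sub>m k"
    using pinv_props[OF assms(9) kn assms(10) assms(11)] unfolding X_def by auto
  have Qs: "Qs \<in> carrier_mat m k" and Rs: "Rs \<in> carrier_mat k n" and Ai: "Ai \<in> carrier_mat m n"
    and Ps: "Ps \<in> carrier_mat n n" and As: "As \<in> carrier_mat m n" using assms by auto
  have QtQ: "transpose_mat Qs * Qs = 1\<^sub>m k" by (rule assms(8))
  define M where "M = Qs * transpose_mat Qs"
  have M: "M \<in> carrier_mat m m" unfolding M_def using Qs by auto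
  define H where "H = 1\<^sub>m m - M"
  have H: "H \<in> carrier_mat m m" unfolding H_def using M by auto
  have HQ: "H * Qs = 0\<^sub>m m k"
  proof -
    have "H * Qs = 1\<^sub>m m * Qs - M * Qs" unfolding H_def
      by (rule minus_mult_distrib_mat) (use M Qs in auto)
    also have "M * Qs = Qs * (transpose_mat Qs * Qs)" unfolding M_def
      by (rule assoc_mult_mat) (use Qs in auto)
    also have "1\<^sub>m m * Qs - Qs * (transpose_mat Qs * Qs) = 0\<^sub>m m k" using QtQ Qs
      by (intro eq_matI) auto
    finally show ?thesis .
  qed
  have QH: "transpose_mat Qs * H = 0\<^sub>m k m"
  proof -
    have "transpose_mat Qs * H = transpose_mat Qs * 1\<^sub>m m - transpose_mat Qs * M" unfolding H_def
      by (rule mult_minus_distrib_mat) (use M Qs in auto)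
    also have "transpose_mat Qs * M = (transpose_mat Qs * Qs) * transpose_mat Qs" unfolding M_def
      by (rule assoc_mult_mat[symmetric]) (use Qs in auto)
    also have "transpose_mat Qs * 1\<^sub>m m - (transpose_mat Qs * Qs) * transpose_mat Qs = 0\<^sub>m k m"
      using QtQ Qs by (intro eq_matI) auto
    finally show ?thesis .
  qed
  define C where "C = Ai * Ps"
  have C: "C \<in> carrier_mat m n" unfolding C_def using Ai Ps by auto
  define Z where "Z = 1\<^sub>m n - X * Rs"
  have Z: "Z \<in> carrier_mat n n" unfolding Z_def using X Rs by auto
  have Eeq: "(1\<^sub>m m - Qs * transpose_mat Qs) * Ai * Ps * (1\<^sub>m n - pinv Rs * Rs) = H * C * Z"
    unfolding H_def M_def X_def[symmetric] Z_def[symmetric] C_def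
    by (subst assoc_mult_mat[of _ m m _ n _ n]) (use H[unfolded H_def M_def] Ai Ps in auto)
  have HCZ: "H * C * Z = H * C - H * C * (X * Rs)" unfolding Z_def
    by (subst mult_minus_distrib_mat[of _ m n]) (use H C X Rs in auto)
  have sndL: "snd (dual_mult (As, Ai) (Ps, 0\<^sub>m n n)) = C"
    unfolding dual_mult_def C_def using As Ai Ps by simp
  have fstL: "fst (dual_mult (As, Ai) (Ps, 0\<^sub>m n n)) = Qs * Rs"
    unfolding dual_mult_def using assms(12) by simp
  have nec: "H * C * Z = 0\<^sub>m m n" if Qi: "Qi \<in> carrier_mat m k" and Ri: "Ri \<in> carrier_mat k n"
    and eq: "C = Qs * Ri + Qi * Rs" for Qi Ri
  proof -
    have "H * C = H * (Qs * Ri) + H * (Qi * Rs)" unfolding eq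
      by (rule mult_add_distrib_mat) (use H Qs Ri Qi Rs in auto)
    also have "H * (Qs * Ri) = 0\<^sub>m m n"
      using HQ H Qs Ri by (subst assoc_mult_mat[symmetric, of _ m m _ k _ n]) auto
    also have "H * (Qi * Rs) = (H * Qi) * Rs" using H Qi Rs by simp
    finally have HC: "H * C = (H * Qi) * Rs" using H Qi Rs by simp
    have HQi: "H * Qi \<in> carrier_mat m k" using H Qi by auto
    have RXR: "Rs * (X * Rs) = Rs"
    proof -
      have "Rs * (X * Rs) = (Rs * X) * Rs"
        by (rule assoc_mult_mat[symmetric]) (use Rs X in auto)
      thus ?thesis unfolding RX using Rs by simp
    qed
    have "H * C * (X * Rs) = (H * Qi) * (Rs * (X * Rs))"
      unfolding HC by (rule assoc_mult_mat) (use HQi Rs X in auto)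
    also have "\<dots> = H * C" unfolding RXR HC ..
    finally have "H * C * (X * Rs) = H * C" .
    thus ?thesis unfolding HCZ using H C by (intro eq_matI) auto
  qed
  have constr: "let B = transpose_mat Qs * Ai * Ps;
               P = Pmat k B Rs;
               Qi = (1\<^sub>m m - Qs * transpose_mat Qs) * Ai * Ps * pinv Rs + Qs * P;
               Ri = transpose_mat Qs * Ai * Ps - P * Rs
           in Qi \<in> carrier_mat m k \<and> Ri \<in> carrier_mat k n \<and>
              dual_mult (dual_transpose (Qs, Qi)) (Qs, Qi) = (1\<^sub>m k, 0\<^sub>m k k) \<and>
              dual_upper_trapezoidal (Rs, Ri) \<and>
              dual_mult (As, Ai) (Ps, 0\<^sub>m n n) = dual_mult (Qs, Qi) (Rs, Ri)"
    if E0: "H * C * Z = 0\<^sub>m m n"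
  proof -
    define B where "B = transpose_mat Qs * C"
    have B: "B \<in> carrier_mat k n" unfolding B_def using Qs C by auto
    have Bdef: "transpose_mat Qs * Ai * Ps = B" unfolding B_def C_def
      by (rule assoc_mult_mat) (use Qs Ai Ps in auto)
    define P where "P = Pmat k B Rs"
    have P: "P \<in> carrier_mat k k" unfolding P_def by (rule Pmat_carrier)
    define W where "W = H * C * X"
    have W: "W \<in> carrier_mat m k" unfolding W_def using H C X by auto
    have Wdef: "(1\<^sub>m m - Qs * transpose_mat Qs) * Ai * Ps * pinv Rs = W"
      unfolding W_def H_def M_def X_def C_def
      by (subst assoc_mult_mat[of _ m m _ n _ n]) (use H[unfolded H_def M_def] Ai Ps in auto)
    define Qi where "Qi = W + Qs * P"
    define Ri where "Ri = B - P * Rs"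
    have Qi: "Qi \<in> carrier_mat m k" unfolding Qi_def using W Qs P by auto
    have Ri: "Ri \<in> carrier_mat k n" unfolding Ri_def using B P Rs by auto
    have QtW: "transpose_mat Qs * W = 0\<^sub>m k k"
    proof -
      have "transpose_mat Qs * W = (transpose_mat Qs * H) * (C * X)" unfolding W_def
        using Qs H C X by (simp add: assoc_mult_mat[of _ k m _ m _ k])
      thus ?thesis unfolding QH using C X by simp
    qed
    have QtQi: "transpose_mat Qs * Qi = P"
    proof -
      have "transpose_mat Qs * Qi = transpose_mat Qs * W + transpose_mat Qs * (Qs * P)"
        unfolding Qi_def by (rule mult_add_distrib_mat) (use Qs W P in auto)
      also have "transpose_mat Qs * (Qs * P) = P"
        using Qs P QtQ by (subst assoc_mult_mat[symmetric, of _ k m _ k _ k]) auto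
      finally show ?thesis unfolding QtW using P by simp
    qed
    have QiQ: "transpose_mat Qi * Qs = transpose_mat P"
      using transpose_mult[of "transpose_mat Qs" k m Qi k] Qs Qi QtQi by simp
    have part1: "dual_mult (dual_transpose (Qs, Qi)) (Qs, Qi) = (1\<^sub>m k, 0\<^sub>m k k)"
      unfolding dual_mult_def dual_transpose_def using QtQ QtQi QiQ Pmat_skew[of k B Rs]
      by (simp add: P_def)
    have part2: "dual_upper_trapezoidal (Rs, Ri)"
      unfolding dual_upper_trapezoidal_def
    proof (simp add: assms(10), unfold upper_trapezoidal_def, intro allI impI)
      fix i j assume i: "i < dim_row Ri" and j: "j < dim_col Ri" and ji: "j < i"
      have ik: "i < k" and jn: "j < n" using i j Ri by auto
      have "Ri $$ (i, j) = B $$ (i, j) - (P * Rs) $$ (i, j)"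
        unfolding Ri_def using B P Rs ik jn by simp
      also have "(P * Rs) $$ (i, j) = (\<Sum>t\<in>{0..<k}. Pmat k B Rs $$ (i, t) * Rs $$ (t, j))"
        using P Rs ik jn by (simp add: scalar_prod_def P_def)
      also have "\<dots> = B $$ (i, j)" by (rule trap_sum[OF Rs assms(10) assms(11) ji ik jn])
      finally show "Ri $$ (i, j) = 0" by simp
    qed
    have HCXR: "H * C * (X * Rs) = H * C"
      by (rule minus_zero_eq[symmetric, of _ m n]) (use H C X Rs E0 HCZ in auto)
    have sndR: "Qs * Ri + Qi * Rs = C"
    proof -
      have a: "Qs * Ri = M * C - Qs * P * Rs"
      proof -
        have "Qs * Ri = Qs * B - Qs * (P * Rs)" unfolding Ri_def
          by (rule mult_minus_distrib_mat) (use Qs B P Rs in auto)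
        also have "Qs * B = M * C" unfolding B_def M_def
          by (rule assoc_mult_mat[symmetric]) (use Qs C in auto)
        also have "Qs * (P * Rs) = Qs * P * Rs"
          by (rule assoc_mult_mat[symmetric]) (use Qs P Rs in auto)
        finally show ?thesis .
      qed
      have b: "Qi * Rs = H * C + Qs * P * Rs"
      proof -
        have "Qi * Rs = W * Rs + Qs * P * Rs" unfolding Qi_def
          by (rule add_mult_distrib_mat) (use W Qs P Rs in auto)
        also have "W * Rs = H * C * (X * Rs)" unfolding W_def
          by (rule assoc_mult_mat) (use H C X Rs in auto)
        finally show ?thesis unfolding HCXR .
      qed
      have "Qs * Ri + Qi * Rs = M * C + H * C" unfolding a b
        by (rule sum_cancel_aux) (use M C H Qs P Rs in auto)
      also have "\<dots> = C" unfolding H_def by (rule proj_sum[OF M C])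
      finally show ?thesis .
    qed
    have part3: "dual_mult (As, Ai) (Ps, 0\<^sub>m n n) = dual_mult (Qs, Qi) (Rs, Ri)"
      using sndL fstL sndR by (simp add: dual_mult_def prod_eq_iff)
    show ?thesis unfolding Let_def Bdef P_def[symmetric] Wdef Qi_def[symmetric] Ri_def[symmetric]
      using Qi Ri part1 part2 part3 by blast
  qed
  show ?thesis
  proof (intro conjI impI iffI)
    assume "\<exists>Qi Ri. Qi \<in> carrier_mat m k \<and> Ri \<in> carrier_mat k n \<and>
            dual_mult (dual_transpose (Qs, Qi)) (Qs, Qi) = (1\<^sub>m k, 0\<^sub>m k k) \<and>
            dual_upper_trapezoidal (Rs, Ri) \<and>
            dual_mult (As, Ai) (Ps, 0\<^sub>m n n) = dual_mult (Qs, Qi) (Rs, Ri)"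
    then obtain Qi Ri where Qi: "Qi \<in> carrier_mat m k" and Ri: "Ri \<in> carrier_mat k n"
      and eq: "dual_mult (As, Ai) (Ps, 0\<^sub>m n n) = dual_mult (Qs, Qi) (Rs, Ri)" by blast
    have "C = Qs * Ri + Qi * Rs" using arg_cong[OF eq, of snd] sndL by (simp add: dual_mult_def)
    thus "(1\<^sub>m m - Qs * transpose_mat Qs) * Ai * Ps * (1\<^sub>m n - pinv Rs * Rs) = 0\<^sub>m m n"
      unfolding Eeq using nec[OF Qi Ri] by blast
  next
    assume "(1\<^sub>m m - Qs * transpose_mat Qs) * Ai * Ps * (1\<^sub>m n - pinv Rs * Rs) = 0\<^sub>m m n"
    hence "H * C * Z = 0\<^sub>m m n" unfolding Eeq .
    from constr[OF this] show "\<exists>Qi Ri. Qi \<in> carrier_mat m k \<and> Ri \<in> carrier_mat k n \<and>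
            dual_mult (dual_transpose (Qs, Qi)) (Qs, Qi) = (1\<^sub>m k, 0\<^sub>m k k) \<and>
            dual_upper_trapezoidal (Rs, Ri) \<and>
            dual_mult (As, Ai) (Ps, 0\<^sub>m n n) = dual_mult (Qs, Qi) (Rs, Ri)"
      unfolding Let_def by blast
  next
    assume "(1\<^sub>m m - Qs * transpose_mat Qs) * Ai * Ps * (1\<^sub>m n - pinv Rs * Rs) = 0\<^sub>m m n"
    hence "H * C * Z = 0\<^sub>m m n" unfolding Eeq .
    from constr[OF this] show "let B = transpose_mat Qs * Ai * Ps;
               P = Pmat k B Rs;
               Qi = (1\<^sub>m m - Qs * transpose_mat Qs) * Ai * Ps * pinv Rs + Qs * P;
               Ri = transpose_mat Qs * Ai * Ps - P * Rs
           in dual_mult (dual_transpose (Qs, Qi)) (Qs, Qi) = (1\<^sub>m k, 0\<^sub>m k k) \<and>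
              dual_upper_trapezoidal (Rs, Ri) \<and>
              dual_mult (As, Ai) (Ps, 0\<^sub>m n n) = dual_mult (Qs, Qi) (Rs, Ri)"
      unfolding Let_def by blast
  qed
qed

end
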